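(* Let $a,b,k$ be positive integers. If the player cannot win the $(a,b)$-game, then the player cannot win the $(ak,b)$-game.
   Context: The $(n,m)$-game: $n$ counters at positions $1,\dots,n$ (vertices in cyclic order of a regular $n$-gon table), each showing an element of $\mathbb{Z}_m$; a configuration is a vector in $\mathbb{Z}_m^n$, initially arbitrary and unknown. Each turn the player chooses a move $y\in\mathbb{Z}_m^n$ added coordinatewise, then the table is rotated by an adversarially chosen $k\in\mathbb{Z}_n$, replacing $x$ by $x'$ with $x'_{i+k}=x_i$ (indices mod $n$). The player wins if at some moment (including initially) all counters show $0$. A strategy is a finite sequence of moves; it is winning if it forces the zero configuration at some time for every initial configuration and every choice of rotations. "The player can win" means a winning finite sequence exists. *)

theory Defs
  imports Main
begin

text \<open>A configuration of the (n,m)-game is a function nat => int; only the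
  positions 0..n-1 matter (position i+1 of the paper is index i here), and entries
  are read modulo m (elements of Z_m).\<close>

type_synonym config = "nat \<Rightarrow> int"

definition zero_config :: "nat \<Rightarrow> nat \<Rightarrow> config \<Rightarrow> bool" where
  "zero_config n m x \<longleftrightarrow> (\<forall>i<n. x i mod int m = 0)"

text \<open>Rotation by k: x' (i+k) = x i, indices mod n.\<close>
definition rot :: "nat \<Rightarrow> nat \<Rightarrow> config \<Rightarrow> config" where
  "rot n k x = (\<lambda>j. x ((j + n - k mod n) mod n))"

primrec play :: "nat \<Rightarrow> config \<Rightarrow> config list \<Rightarrow> nat list \<Rightarrow> nat \<Rightarrow> config" where
  "play n x ys ks 0 = x"
| "play n x ys ks (Suc t) = rot n (ks ! t) (\<lambda>i. play n x ys ks t i + (ys ! t) i)"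

definition winning :: "nat \<Rightarrow> nat \<Rightarrow> config list \<Rightarrow> bool" where
  "winning n m ys \<longleftrightarrow>
     (\<forall>x ks. length ks = length ys \<longrightarrow>
        (\<exists>t\<le>length ys. zero_config n m (play n x ys ks t)))"

definition can_win :: "nat \<Rightarrow> nat \<Rightarrow> bool" where
  "can_win n m \<longleftrightarrow> (\<exists>ys. winning n m ys)"

end

theory Submission
  imports Defs
begin

definition PP :: "nat \<Rightarrow> nat \<Rightarrow> config \<Rightarrow> config" where
  "PP N a X = (\<lambda>j. \<Sum>i\<in>{i. i < N \<and> i mod a = j mod a}. X i)"

lemma arith1:
  fixes N r i :: nat assumes "i < N"
  shows "((i + N - r mod N) mod N + r) mod N = i"
proof -
  have N0: "N > 0" using assms by simp
  have "r mod N < N" using N0 by simp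
  then have e: "int (i + N - r mod N) = int i + int N - int (r mod N)" by simp
  have "int (((i + N - r mod N) mod N + r) mod N) = ((int i + int N - int r mod int N) mod int N + int r) mod int N"
    by (simp add: e zmod_int of_nat_mod)
  also have "\<dots> = (int i + int N - int r mod int N + int r) mod int N" by (simp add: mod_add_left_eq)
  also have "int i + int N - int r mod int N + int r = int i + int N * (1 + int r div int N)"
    by (simp add: algebra_simps minus_mod_eq_mult_div[symmetric])
  also have "(int i + int N * (1 + int r div int N)) mod int N = int i" using assms by simp
  finally show ?thesis by linarith
qed

lemma arith2:
  fixes N r i :: nat assumes "i < N"
  shows "((i + r) mod N + N - r mod N) mod N = i"
proof -
  have N0: "N > 0" using assms by simp
  have "r mod N < N" using N0 by simp
  then have e: "int ((i + r) mod N + N - r mod N) = int ((i + r) mod N) + int N - int (r mod N)" by simp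
  have "int (((i + r) mod N + N - r mod N) mod N) = ((int i + int r) mod int N + int N - int r mod int N) mod int N"
    by (simp add: e zmod_int of_nat_mod)
  also have "\<dots> = (int i + int r + int N - int r mod int N) mod int N"
    by (metis mod_add_left_eq mod_diff_left_eq)
  also have "int i + int r + int N - int r mod int N = int i + int N * (1 + int r div int N)"
    by (simp add: algebra_simps minus_mod_eq_mult_div[symmetric])
  also have "(int i + int N * (1 + int r div int N)) mod int N = int i" using assms by simp
  finally show ?thesis by linarith
qed

lemma arith3:
  fixes N r i a j :: nat assumes "a dvd N" "N > 0" "a > 0"
  shows "((i + N - r mod N) mod N) mod a = (j + a - r mod a) mod a \<longleftrightarrow> i mod a = j mod a"
proof -
  have "r mod N < N" using assms by simp
  then have e: "int (i + N - r mod N) = int i + int N - int (r mod N)" by simp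
  have ra: "r mod a < a" using assms by simp
  then have e2: "int (j + a - r mod a) = int j + int a - int (r mod a)" by simp
  have "int (((i + N - r mod N) mod N) mod a) = (int i + int N - int r mod int N) mod int a"
    using assms by (simp add: e zmod_int of_nat_mod mod_mod_cancel)
  also have "\<dots> = (int i - int r) mod int a"
  proof -
    have "int i + int N - int r mod int N = (int i - int r) + int N * (1 + int r div int N)"
      by (simp add: algebra_simps minus_mod_eq_mult_div[symmetric])
    moreover have "int a dvd int N * (1 + int r div int N)" using assms by simp
    ultimately show ?thesis by (metis dvd_imp_mod_0 mod_add_right_eq add.right_neutral)
  qed
  finally have A: "int (((i + N - r mod N) mod N) mod a) = (int i - int r) mod int a" .
  have "int ((j + a - r mod a) mod a) = (int j + int a - int r mod int a) mod int a"
    by (simp add: e2 zmod_int of_nat_mod)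
  also have "\<dots> = (int j - int r) mod int a"
  proof -
    have "int j + int a - int r mod int a = (int j - int r) + int a * (1 + int r div int a)"
      by (simp add: algebra_simps minus_mod_eq_mult_div[symmetric])
    then show ?thesis by (metis mod_mult_self2)
  qed
  finally have B: "int ((j + a - r mod a) mod a) = (int j - int r) mod int a" .
  have "((i + N - r mod N) mod N) mod a = (j + a - r mod a) mod a \<longleftrightarrow> (int i - int r) mod int a = (int j - int r) mod int a"
    using A B by (metis of_nat_eq_iff)
  also have "\<dots> \<longleftrightarrow> int i mod int a = int j mod int a"
    by (metis mod_diff_left_eq diff_add_cancel mod_add_left_eq)
  also have "\<dots> \<longleftrightarrow> i mod a = j mod a" by (metis of_nat_eq_iff zmod_int)
  finally show ?thesis .
qed

lemma PP_rot:
  assumes "a dvd N" "N > 0" "a > 0"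
  shows "PP N a (rot N r X) = rot a r (PP N a X)"
proof
  fix j
  let ?S = "{i. i < N \<and> i mod a = j mod a}"
  let ?T = "{i. i < N \<and> i mod a = ((j + a - r mod a) mod a) mod a}"
  let ?h = "\<lambda>i. (i + N - r mod N) mod N"
  have bij: "bij_betw ?h ?S ?T"
  proof (rule bij_betw_byWitness[where f'="\<lambda>i. (i + r) mod N"])
    show "\<forall>x\<in>?S. (?h x + r) mod N = x" using arith1 by auto
    show "\<forall>y\<in>?T. ?h ((y + r) mod N) = y" using arith2 by auto
    show "?h ` ?S \<subseteq> ?T" using arith3[OF assms] assms by auto
    show "(\<lambda>i. (i + r) mod N) ` ?T \<subseteq> ?S"
    proof
      fix y assume "y \<in> (\<lambda>i. (i + r) mod N) ` ?T"
      then obtain i where i: "i \<in> ?T" "y = (i + r) mod N" by auto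
      have "y < N" using i assms by simp
      moreover have "?h y = i" using i arith2 by auto
      ultimately show "y \<in> ?S" using i arith3[OF assms, of y r j] by auto
    qed
  qed
  have "PP N a (rot N r X) j = (\<Sum>i\<in>?S. X (?h i))" by (simp add: PP_def rot_def)
  also have "\<dots> = (\<Sum>i\<in>?T. X i)" using sum.reindex_bij_betw[OF bij, of X] .
  also have "\<dots> = rot a r (PP N a X) j" by (simp add: PP_def rot_def)
  finally show "PP N a (rot N r X) j = rot a r (PP N a X) j" .
qed

lemma PP_add: "PP N a (\<lambda>i. A i + B i) = (\<lambda>j. PP N a A j + PP N a B j)"
  by (simp add: PP_def sum.distrib)

lemma PP_play:
  assumes "a dvd N" "N > 0" "a > 0" "t \<le> length ys"
  shows "PP N a (play N X ys ks t) = play a (PP N a X) (map (PP N a) ys) ks t"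
  using assms(4)
proof (induction t)
  case 0 then show ?case by simp
next
  case (Suc t)
  then have "t < length ys" by simp
  then show ?case using Suc by (simp add: PP_rot[OF assms(1-3)] PP_add)
qed

lemma play_agree:
  assumes "a > 0" "\<forall>i<a. x i = x' i" "i < a"
  shows "play a x ys ks t i = play a x' ys ks t i"
  using assms(3)
proof (induction t arbitrary: i)
  case 0 then show ?case using assms by simp
next
  case (Suc t)
  have "(i + a - ks ! t mod a) mod a < a" using assms by simp
  then show ?case using Suc by (simp add: rot_def)
qed

lemma PP_zero:
  assumes "zero_config N b Y"
  shows "zero_config a b (PP N a Y)"
  using assms unfolding zero_config_def PP_def
  by (auto intro!: dvd_sum simp: dvd_eq_mod_eq_0[symmetric])

theorem lemma3p1:
  fixes a b k :: nat
  assumes "a > 0" and "b > 0" and "k > 0"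
    and "\<not> can_win a b"
  shows "\<not> can_win (a * k) b"
proof
  assume "can_win (a * k) b"
  then obtain ys where W: "winning (a*k) b ys" unfolding can_win_def by blast
  let ?N = "a * k"
  have dv: "a dvd ?N" and N0: "?N > 0" using assms by auto
  have "winning a b (map (PP ?N a) ys)"
    unfolding winning_def
  proof (intro allI impI)
    fix x :: config and ks :: "nat list" assume len: "length ks = length (map (PP ?N a) ys)"
    define X :: config where "X = (\<lambda>i. if i < a then x i else 0)"
    have agree: "\<forall>i<a. PP ?N a X i = x i"
    proof (intro allI impI)
      fix i assume i: "i < a"
      have "a \<le> ?N" using assms by simp
      then have "i < ?N" using i by linarith
      have "PP ?N a X i = (\<Sum>j\<in>{j. j < ?N \<and> j mod a = i mod a}. if j = i then x i else 0)"
        unfolding PP_def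
      proof (rule sum.cong[OF refl])
        fix j assume "j \<in> {j. j < ?N \<and> j mod a = i mod a}"
        then have "j mod a = i" using i by simp
        then show "X j = (if j = i then x i else 0)" unfolding X_def using i by auto
      qed
      also have "\<dots> = x i" using \<open>i < ?N\<close> by (simp add: sum.delta)
      finally show "PP ?N a X i = x i" .
    qed
    from W len obtain t where t: "t \<le> length ys" "zero_config ?N b (play ?N X ys ks t)"
      unfolding winning_def by auto
    have "zero_config a b (PP ?N a (play ?N X ys ks t))" using PP_zero t(2) by blast
    then have z: "zero_config a b (play a (PP ?N a X) (map (PP ?N a) ys) ks t)"
      using PP_play[OF dv N0 assms(1) t(1)] by simp
    have "zero_config a b (play a x (map (PP ?N a) ys) ks t)"
      using z play_agree[OF assms(1) agree] unfolding zero_config_def by simp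
    then show "\<exists>t\<le>length (map (PP ?N a) ys). zero_config a b (play a x (map (PP ?N a) ys) ks t)"
      using t(1) by auto
  qed
  then show False using assms(4) unfolding can_win_def by blast
qed

end
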